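(* Let $k,\ell,n,p$ be positive integers, and let $C\in\mathbb{R}^{k\times \ell}$, $A\in\mathbb{R}^{n\times p}$, $M\in\mathbb{R}^{k\times k}$ symmetric positive semidefinite, and $B\in\mathbb{R}^{k\times n}$ injective (i.e. $\mathrm{null}(B)=\{0\}$). Define the block matrix \[ \mathcal{M}:=\begin{bmatrix} -C^T & 0\\ 0 & -A^T\\ M & -B\\ B^T & 0\end{bmatrix}\in\mathbb{R}^{(\ell+p+k+n)\times(k+n)}. \] Then $\mathcal{M}$ is injective if and only if \[ \mathrm{null}(M)\cap\mathrm{null}(B^T)\cap\mathrm{null}(C^T)=\{0\}. \]
   Context: This matrix arises from the KKT system of the problem of minimizing over $y\in\mathbb{R}^n$ the piecewise linear quadratic function $\rho(y)=\sup_{u\in\mathbb{R}^k:\,C^Tu\le c}\{\langle u,b+By\rangle-\tfrac12\langle u,Mu\rangle\}$ subject to $A^Ty\le a$, where $b\in\mathbb{R}^k$, $c\in\mathbb{R}^\ell$, $a\in\mathbb{R}^p$. $\mathrm{null}(\cdot)$ denotes the null space. *)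

theory Defs
  imports "HOL-Analysis.Analysis"
begin

definition mat_null :: "real^'c^'r \<Rightarrow> (real^'c) set" where
  "mat_null X = {x. X *v x = 0}"

text \<open>The block matrix
  [ -C^T 0 ; 0 -A^T ; M -B ; B^T 0 ], with row blocks indexed by 'l, 'p, 'k, 'n
  and column blocks indexed by 'k, 'n.
  C : k x l, A : n x p, M : k x k, B : k x n.\<close>
definition kkt_block ::
  "real^'l^'k \<Rightarrow> real^'p^'n \<Rightarrow> real^'k^'k \<Rightarrow> real^'n^'k \<Rightarrow>
   real^('k + 'n)^('l + ('p + ('k + 'n)))" where
  "kkt_block C A M B = (\<chi> i j.
     case i of
       Inl r \<Rightarrow> (case j of Inl c \<Rightarrow> - (transpose C $ r $ c) | Inr c \<Rightarrow> 0)
     | Inr (Inl r) \<Rightarrow> (case j of Inl c \<Rightarrow> 0 | Inr c \<Rightarrow> - (transpose A $ r $ c))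
     | Inr (Inr (Inl r)) \<Rightarrow> (case j of Inl c \<Rightarrow> M $ r $ c | Inr c \<Rightarrow> - (B $ r $ c))
     | Inr (Inr (Inr r)) \<Rightarrow> (case j of Inl c \<Rightarrow> transpose B $ r $ c | Inr c \<Rightarrow> 0))"

end

theory Submission
  imports Defs
begin

lemma sumP: "sum g (UNIV::('a::finite+'b::finite) set) = (\<Sum>x\<in>UNIV. g (Inl x)) + (\<Sum>x\<in>UNIV. g (Inr x))"
  using sum.Plus[of "UNIV::'a set" "UNIV::'b set" g] by (simp add: o_def)

lemma psd_zero:
  fixes M :: "real^'k::finite^'k"
  assumes sym: "transpose M = M" and psd: "\<forall>x. 0 \<le> x \<bullet> (M *v x)"
    and z: "u \<bullet> (M *v u) = 0"
  shows "M *v u = 0"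
proof -
  let ?v = "M *v u"
  have sw: "u \<bullet> (M *v ?v) = ?v \<bullet> ?v"
    by (metis dot_lmul_matrix inner_commute sym vector_transpose_matrix)
  define b where "b = ?v \<bullet> ?v"
  define c where "c = ?v \<bullet> (M *v ?v)"
  have c0: "c \<ge> 0" using psd c_def by auto
  have q: "0 \<le> b * t * 2 + t * t * c" for t :: real
  proof -
    have "0 \<le> (u + t *\<^sub>R ?v) \<bullet> (M *v (u + t *\<^sub>R ?v))" using psd by blast
    also have "\<dots> = u \<bullet> (M *v u) + t * (u \<bullet> (M *v ?v)) + t * (?v \<bullet> (M *v u)) + t * t * c"
      by (simp add: matrix_vector_right_distrib inner_add_left inner_add_right c_def
          matrix_vector_mult_scaleR algebra_simps)
    finally show ?thesis using z sw b_def by (simp add: algebra_simps)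
  qed
  have "b = 0"
  proof (rule ccontr)
    assume bn: "b \<noteq> 0"
    define t where "t = - b / (1 + c)"
    have ne: "1 + c \<noteq> 0" using c0 by linarith
    have tb: "b = - t * (1 + c)" using ne unfolding t_def by (simp add: field_simps)
    have "0 \<le> b * t * 2 + t * t * c" using q by blast
    also have "b * t * 2 + t * t * c = - (t * t) * (2 + c)" unfolding tb by (simp add: algebra_simps)
    finally have "0 \<le> - (t * t) * (2 + c)" .
    moreover have "t \<noteq> 0" using tb bn by auto
    then have "t * t > 0" by (auto simp: zero_less_mult_iff linorder_neq_iff)
    moreover have "(t * t) * (2 + c) > 0" using mult_pos_pos[OF \<open>t * t > 0\<close>, of "2 + c"] c0 by linarith
    ultimately show False unfolding mult_minus_left by linarith
  qed
  thus ?thesis using b_def by simp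
qed

lemma comps:
  fixes C :: "real^'l::finite^'k::finite"
    and A :: "real^'p::finite^'n::finite"
    and M :: "real^'k^'k"
    and B :: "real^'n^'k"
    and z :: "real^('k+'n)"
  defines "u \<equiv> (\<chi> c. z $ Inl c)" and "y \<equiv> (\<chi> c. z $ Inr c)"
  shows "(kkt_block C A M B *v z) $ Inl r = - ((transpose C *v u) $ r)"
    "(kkt_block C A M B *v z) $ Inr (Inl r2) = - ((transpose A *v y) $ r2)"
    "(kkt_block C A M B *v z) $ Inr (Inr (Inl r3)) = (M *v u) $ r3 - (B *v y) $ r3"
    "(kkt_block C A M B *v z) $ Inr (Inr (Inr r4)) = (transpose B *v u) $ r4"
  by (simp_all add: kkt_block_def matrix_vector_mult_def sumP u_def y_def
      sum_negf sum_subtractf algebra_simps)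

lemma allsum: "(\<forall>i::('a+('b+('c+'d))). P i) \<longleftrightarrow>
  (\<forall>r. P (Inl r)) \<and> (\<forall>r. P (Inr (Inl r))) \<and> (\<forall>r. P (Inr (Inr (Inl r)))) \<and> (\<forall>r. P (Inr (Inr (Inr r))))"
  by (metis sum.exhaust)

lemma vec0_iff4:
  fixes v :: "real^('a::finite+('b::finite+('c::finite+'d::finite)))"
  shows "v = 0 \<longleftrightarrow> (\<forall>r. v $ Inl r = 0) \<and> (\<forall>r. v $ Inr (Inl r) = 0) \<and>
     (\<forall>r. v $ Inr (Inr (Inl r)) = 0) \<and> (\<forall>r. v $ Inr (Inr (Inr r)) = 0)"
  unfolding vec_eq_iff zero_index by (rule allsum)

lemma vec0_iff2:
  fixes v :: "real^('a::finite+'b::finite)"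
  shows "v = 0 \<longleftrightarrow> (\<chi> c. v $ Inl c) = 0 \<and> (\<chi> c. v $ Inr c) = 0"
  unfolding vec_eq_iff zero_index vec_lambda_beta by (metis sum.exhaust)

lemma kernel_iff:
  fixes C :: "real^'l::finite^'k::finite"
    and A :: "real^'p::finite^'n::finite"
    and M :: "real^'k^'k"
    and B :: "real^'n^'k"
    and z :: "real^('k+'n)"
  defines "u \<equiv> (\<chi> c. z $ Inl c)" and "y \<equiv> (\<chi> c. z $ Inr c)"
  shows "kkt_block C A M B *v z = 0 \<longleftrightarrow>
    transpose C *v u = 0 \<and> transpose A *v y = 0 \<and> M *v u - B *v y = 0 \<and> transpose B *v u = 0"
proof -
  note cs = comps[of C A M B z, folded u_def y_def]
  show ?thesis
    unfolding vec0_iff4[of "kkt_block C A M B *v z"] cs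
    unfolding vec_eq_iff zero_index vector_minus_component neg_equal_0_iff_equal
    by blast
qed

theorem theorem5p1:
  fixes C :: "real^'l::finite^'k::finite"
    and A :: "real^'p::finite^'n::finite"
    and M :: "real^'k^'k"
    and B :: "real^'n^'k"
  assumes M_sym: "transpose M = M"
    and M_psd: "\<forall>x. 0 \<le> x \<bullet> (M *v x)"
    and B_inj: "mat_null B = {0}"
  shows "mat_null (kkt_block C A M B) = {0} \<longleftrightarrow>
         mat_null M \<inter> mat_null (transpose B) \<inter> mat_null (transpose C) = {0}"
proof
  assume H: "mat_null (kkt_block C A M B) = {0}"
  show "mat_null M \<inter> mat_null (transpose B) \<inter> mat_null (transpose C) = {0}"
  proof (rule set_eqI, rule iffI)
    fix u assume "u \<in> mat_null M \<inter> mat_null (transpose B) \<inter> mat_null (transpose C)"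
    hence u: "M *v u = 0" "transpose B *v u = 0" "transpose C *v u = 0" by (auto simp: mat_null_def)
    define z :: "real^('k+'n)" where "z = (\<chi> j. case j of Inl c \<Rightarrow> u $ c | Inr _ \<Rightarrow> 0)"
    have zu: "(\<chi> c. z $ Inl c) = u" and zy: "(\<chi> c. z $ Inr c) = 0"
      by (simp_all add: z_def vec_eq_iff)
    have "kkt_block C A M B *v z = 0"
      unfolding kernel_iff zu zy using u by simp
    hence "z = 0" using H by (auto simp: mat_null_def)
    hence "u = 0" using zu by (simp add: vec_eq_iff)
    thus "u \<in> {0}" by simp
  qed (auto simp: mat_null_def)
next
  assume H: "mat_null M \<inter> mat_null (transpose B) \<inter> mat_null (transpose C) = {0}"
  show "mat_null (kkt_block C A M B) = {0}"
  proof (rule set_eqI, rule iffI)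
    fix z assume "z \<in> mat_null (kkt_block C A M B)"
    hence K: "kkt_block C A M B *v z = 0" by (simp add: mat_null_def)
    define u where "u = (\<chi> c. z $ Inl c)"
    define y where "y = (\<chi> c. z $ Inr c)"
    have cc: "transpose C *v u = 0 \<and> transpose A *v y = 0 \<and> M *v u - B *v y = 0 \<and> transpose B *v u = 0"
      using K unfolding kernel_iff u_def y_def .
    hence c1: "transpose C *v u = 0" and c3: "M *v u = B *v y" and c4: "transpose B *v u = 0"
      by auto
    have "u \<bullet> (M *v u) = u \<bullet> (B *v y)" using c3 by simp
    also have "\<dots> = (transpose B *v u) \<bullet> y"
      using vector_transpose_matrix[of u "transpose B"]
      by (simp add: dot_lmul_matrix[symmetric] transpose_transpose)
    finally have "u \<bullet> (M *v u) = 0" using c4 by simp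
    hence Mu: "M *v u = 0" using psd_zero M_sym M_psd by blast
    hence "B *v y = 0" using c3 by simp
    hence y0: "y = 0" using B_inj by (auto simp: mat_null_def)
    have "u = 0" using H Mu c1 c4 by (auto simp: mat_null_def)
    hence "z = 0" using y0 vec0_iff2[of z] unfolding u_def y_def by blast
    thus "z \<in> {0}" by simp
  qed (auto simp: mat_null_def)
qed

end
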